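(* Let $r>2$, $p(z_1,z_2)=1-\frac{z_1+z_2}{r}$, and define the Hermitian form $$\langle g,h\rangle=\frac1{4\pi^2}\int_0^{2\pi}\!\!\int_0^{2\pi}\frac{g(e^{i\theta},e^{i\phi})\overline{h(e^{i\theta},e^{i\phi})}}{|p(e^{i\theta},e^{i\phi})|^2}\,d\theta\,d\phi$$ for square-integrable functions $g,h$ on $\mathbb{T}^2$. Let $a=\frac r2-\sqrt{\frac{r^2}{4}-1}$. Then the polynomials $$\sqrt[4]{1-\tfrac4{r^2}},\qquad z_1^k\frac{\sqrt[4]{1-\frac4{r^2}}}{\sqrt{1-a^2}}(z_1-a)\ (k\in\mathbb{Z}_+),\qquad z_2^k\frac{\sqrt[4]{1-\frac4{r^2}}}{\sqrt{1-a^2}}(z_2-a)\ (k\in\mathbb{Z}_+),$$ $$z_1^{k_1}z_2^{k_2}\left(z_1z_2-\frac{z_1}{r}-\frac{z_2}{r}\right)\ ((k_1,k_2)\in\mathbb{Z}_+^2)$$ form a complete set of orthonormal polynomials with respect to $\langle\cdot,\cdot\rangle$ (they are orthonormal and their linear span is the space of all polynomials in $z_1,z_2$).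
   Context: $\mathbb{Z}_+=\{0,1,2,\dots\}$; $\mathbb{T}^2=\{(z_1,z_2):|z_1|=|z_2|=1\}$. *)

theory Defs
  imports "HOL-Analysis.Analysis"
begin

definition pden :: "real \<Rightarrow> complex \<times> complex \<Rightarrow> complex" where
  "pden r z = 1 - (fst z + snd z) / complex_of_real r"

definition herm :: "real \<Rightarrow> (complex \<times> complex \<Rightarrow> complex) \<Rightarrow> (complex \<times> complex \<Rightarrow> complex) \<Rightarrow> complex" where
  "herm r g h = complex_of_real (1 / (4 * pi^2)) *
     integral (cbox (0,0) (2*pi, 2*pi))
       (\<lambda>(\<theta>::real, \<phi>::real).
          g (cis \<theta>, cis \<phi>) * cnj (h (cis \<theta>, cis \<phi>))
          / complex_of_real ((cmod (pden r (cis \<theta>, cis \<phi>)))^2))"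

definition poly2_space :: "(complex \<times> complex \<Rightarrow> complex) set" where
  "poly2_space = {f. \<exists>S c. finite S \<and>
      f = (\<lambda>z. \<Sum>(k1,k2)\<in>S. c (k1,k2) * fst z ^ k1 * snd z ^ k2)}"

definition fspan :: "('i \<Rightarrow> complex \<times> complex \<Rightarrow> complex) \<Rightarrow> (complex \<times> complex \<Rightarrow> complex) set" where
  "fspan F = {f. \<exists>I c. finite I \<and> f = (\<lambda>z. \<Sum>i\<in>I. c i * F i z)}"

datatype idx = Cst | Ione nat | Itwo nat | Iboth nat nat

definition aval :: "real \<Rightarrow> real" where
  "aval r = r / 2 - sqrt (r^2 / 4 - 1)"

definition ofam :: "real \<Rightarrow> idx \<Rightarrow> complex \<times> complex \<Rightarrow> complex" where
  "ofam r i = (case i of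
      Cst \<Rightarrow> (\<lambda>z. complex_of_real (root 4 (1 - 4 / r^2)))
    | Ione k \<Rightarrow> (\<lambda>z. fst z ^ k *
          complex_of_real (root 4 (1 - 4 / r^2) / sqrt (1 - (aval r)^2)) *
          (fst z - complex_of_real (aval r)))
    | Itwo k \<Rightarrow> (\<lambda>z. snd z ^ k *
          complex_of_real (root 4 (1 - 4 / r^2) / sqrt (1 - (aval r)^2)) *
          (snd z - complex_of_real (aval r)))
    | Iboth k1 k2 \<Rightarrow> (\<lambda>z. fst z ^ k1 * snd z ^ k2 *
          (fst z * snd z - fst z / complex_of_real r - snd z / complex_of_real r)))"

end

theory Submission
  imports Defs "HOL-Complex_Analysis.Complex_Analysis"
begin



lemma mean_holo:
  fixes f :: "complex \<Rightarrow> complex"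
  assumes hol: "f holomorphic_on ball 0 R" and R: "1 < R"
  shows "((\<lambda>t. f (cis t)) has_integral (2*pi*f 0)) {0..2*pi}"
proof -
  have sub: "cball (0::complex) 1 \<subseteq> ball 0 R" using R by auto
  have cont: "continuous_on (cball 0 1) f"
    using holomorphic_on_imp_continuous_on[OF holomorphic_on_subset[OF hol sub]] .
  have hol1: "f holomorphic_on ball 0 1" by (rule holomorphic_on_subset[OF hol]) (use R in auto)
  have "((\<lambda>u. f u / (u - 0)) has_contour_integral (2 * of_real pi * \<i> * f 0)) (circlepath 0 1)"
    by (rule Cauchy_integral_circlepath[OF cont hol1]) simp
  then have "((\<lambda>t. f (0 + complex_of_real 1 * cis t) / (0 + complex_of_real 1 * cis t - 0) * complex_of_real 1 * \<i> * cis t) has_integral (2 * of_real pi * \<i> * f 0)) {0..2*pi}"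
    unfolding circlepath_def by (subst has_contour_integral_part_circlepath_iff[symmetric]) auto
  then have "((\<lambda>t. \<i> * f (cis t)) has_integral (2 * of_real pi * \<i> * f 0)) {0..2*pi}"
    by (rule has_integral_eq[rotated]) (auto simp: mult_ac)
  from has_integral_mult_right[OF this, of "-\<i>"] show ?thesis by (simp add: mult_ac)
qed


lemma hi_eq:
  assumes "(f has_integral I) S" "I = J" "\<And>x. x \<in> S \<Longrightarrow> f x = g x"
  shows "(g has_integral J) S"
  using has_integral_eq[OF assms(3) assms(1)] assms(2) by simp

lemma mean_cnj_holo:
  fixes f :: "complex \<Rightarrow> complex"
  assumes "f holomorphic_on ball 0 R" "1 < R"
  shows "((\<lambda>t. cnj (f (cis t))) has_integral (2*pi*cnj (f 0))) {0..2*pi}"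
proof -
  have "((\<lambda>t. f (cis t)) has_integral (2*pi*f 0)) {0..2*pi}" by (rule mean_holo[OF assms])
  then have "(cnj \<circ> (\<lambda>t. f (cis t)) has_integral cnj (2*pi*f 0)) {0..2*pi}"
    by (rule iffD2[OF has_integral_cnj])
  then show ?thesis by (simp add: o_def)
qed


lemma cis_cnj_mult: "cnj (cis t) * cis t = 1"
  by (simp add: cis_cnj cis_mult)

lemma a1: "cis t ^ (j + m) * cnj (cis t) ^ j = cis t ^ m"
proof -
  have "cis t ^ (j + m) * cnj (cis t) ^ j = cis t ^ m * (cnj (cis t) * cis t) ^ j"
    by (simp add: power_add power_mult_distrib)
  then show ?thesis by (simp add: cis_cnj_mult)
qed
lemma a2: "cis t ^ k * cnj (cis t) ^ (k + Suc m) = cnj (cis t ^ Suc m)"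
proof -
  have "cis t ^ k * cnj (cis t) ^ (k + Suc m) = cnj (cis t) ^ Suc m * (cnj (cis t) * cis t) ^ k"
    by (simp add: power_add power_mult_distrib)
  then show ?thesis by (simp add: cis_cnj_mult)
qed

lemma mean_mono:
  "((\<lambda>t. cis t ^ k * cnj (cis t) ^ j) has_integral (if k = j then 2*pi else 0)) {0..2*pi}"
proof (cases "j \<le> k")
  case True
  then obtain m where k: "k = j + m" using le_Suc_ex by blast
  have eq: "cis t ^ k * cnj (cis t) ^ j = cis t ^ m" for t
    unfolding k by (rule a1)
  have hol: "(\<lambda>z::complex. z ^ m) holomorphic_on ball 0 2" by (intro holomorphic_intros)
  from mean_holo[OF hol] have "((\<lambda>t. cis t ^ m) has_integral (2*pi*0^m)) {0..2*pi}" by simp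
  then have "((\<lambda>t. cis t ^ k * cnj (cis t) ^ j) has_integral (2*pi*0^m)) {0..2*pi}"
    by (rule has_integral_eq[rotated]) (simp add: eq)
  moreover have "(2*pi*0^m :: complex) = (if k = j then 2*pi else 0)" by (simp add: k)
  ultimately show ?thesis by simp
next
  case False
  then have "k < j" by simp
  then obtain m where "j = Suc (k + m)" using less_iff_Suc_add by auto
  then have k: "j = k + Suc m" by simp
  have eq: "cis t ^ k * cnj (cis t) ^ j = cnj (cis t ^ Suc m)" for t
    unfolding k by (rule a2)
  have hol: "(\<lambda>z::complex. z ^ Suc m) holomorphic_on ball 0 2" by (intro holomorphic_intros)
  from mean_cnj_holo[OF hol] have "((\<lambda>t. cnj (cis t ^ Suc m)) has_integral 0) {0..2*pi}" by simp
  then have "((\<lambda>t. cis t ^ k * cnj (cis t) ^ j) has_integral 0) {0..2*pi}"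
    by (rule has_integral_eq[rotated]) (simp add: eq)
  then show ?thesis using k by simp
qed

lemma geo_radius:
  fixes c :: complex
  assumes "cmod c < 1"
  obtains R where "1 < R" "\<And>w. w \<in> ball 0 R \<Longrightarrow> 1 - c * w \<noteq> 0"
proof
  define R where "R = 2 / (1 + cmod c)"
  have pos: "0 < 1 + cmod c" by (simp add: add_pos_nonneg)
  show "1 < R" using assms pos unfolding R_def by (simp add: pos_less_divide_eq)
  fix w :: complex assume w: "w \<in> ball 0 R"
  show "1 - c * w \<noteq> 0"
  proof
    assume "1 - c * w = 0"
    then have "cmod (c * w) = 1" by (metis eq_iff_diff_eq_0 norm_one)
    moreover have "cmod (c * w) \<le> cmod c * R"
      using w by (simp add: norm_mult mult_left_mono)
    moreover have "cmod c * R < 1" using assms pos unfolding R_def by (simp add: pos_divide_less_eq)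
    ultimately show False by linarith
  qed
qed

lemma geo_step:
  fixes w z c :: complex
  assumes "w * z = 1" "1 - c * z \<noteq> 0"
  shows "w ^ Suc n / (1 - c * z) = z ^ 0 * w ^ Suc n + c * (w ^ n / (1 - c * z))"
proof -
  have "w ^ Suc n * (1 - c * z) + c * w ^ n = w ^ Suc n - c * w ^ n * (w * z) + c * w ^ n"
    by (simp add: algebra_simps)
  also have "\<dots> = w ^ Suc n" using assms(1) by simp
  finally have e: "w ^ Suc n * (1 - c * z) + c * w ^ n = w ^ Suc n" .
  have "w ^ Suc n / (1 - c * z) = (w ^ Suc n * (1 - c * z) + c * w ^ n) / (1 - c * z)"
    using e by simp
  also have "\<dots> = w ^ Suc n + c * (w ^ n / (1 - c * z))"
    using assms(2) by (simp add: add_divide_distrib)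
  finally show ?thesis by simp
qed

lemma mean_geo:
  fixes c :: complex
  assumes c: "cmod c < 1"
  shows "((\<lambda>t. cnj (cis t) ^ n / (1 - c * cis t)) has_integral (2*pi*c^n)) {0..2*pi}"
proof (induction n)
  case 0
  obtain R where R: "1 < R" "\<And>w. w \<in> ball 0 R \<Longrightarrow> 1 - c * w \<noteq> 0"
    using geo_radius[OF c] by blast
  have "(\<lambda>z. 1 / (1 - c*z)) holomorphic_on ball 0 R" using R(2) by (intro holomorphic_intros) auto
  from mean_holo[OF this R(1)] show ?case by simp
next
  case (Suc n)
  have nz: "1 - c * cis t \<noteq> 0" for t
  proof
    assume "1 - c * cis t = 0"
    then have "cmod (c * cis t) = 1" by (metis eq_iff_diff_eq_0 norm_one)
    then show False using c by (simp add: norm_mult)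
  qed
  have "((\<lambda>t. cis t ^ 0 * cnj (cis t) ^ Suc n + c * (cnj (cis t) ^ n / (1 - c * cis t)))
          has_integral (0 + c * (2*pi*c^n))) {0..2*pi}"
    by (intro has_integral_add has_integral_mult_right Suc.IH) (use mean_mono[of 0 "Suc n"] in simp)
  then show ?case
  proof (rule hi_eq)
    show "0 + c * (complex_of_real (2 * pi) * c ^ n) = complex_of_real (2 * pi) * c ^ Suc n"
      by simp
    fix t :: real
    show "cis t ^ 0 * cnj (cis t) ^ Suc n + c * (cnj (cis t) ^ n / (1 - c * cis t)) =
          cnj (cis t) ^ Suc n / (1 - c * cis t)"
      by (rule geo_step[OF cis_cnj_mult nz, symmetric])
  qed
qed


lemma canc: "(y::complex) \<noteq> 0 \<Longrightarrow> x / y * (y * w / z) = x * w / z"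
  by (cases "z = 0") (simp_all add: field_simps)

lemma W_alg:
  fixes B Bc w r :: complex
  assumes "B \<noteq> 0" "Bc \<noteq> 0" "w \<noteq> 0" "B - w \<noteq> 0" "Bc * w - 1 \<noteq> 0" "B * Bc - 1 \<noteq> 0" "r \<noteq> 0"
  shows "1 / ((B - w)/r * ((Bc - 1/w)/r)) = r^2/(B*Bc - 1) * (1/(1 - (1/B)*w) + 1/(1 - (1/Bc)*(1/w)) - 1)"
proof -
  have e1: "Bc - 1/w = (Bc * w - 1)/w" using assms by (simp add: field_simps)
  have e2: "1 - (1/B)*w = (B - w)/B" using assms by (simp add: field_simps)
  have e3: "1 - (1/Bc)*(1/w) = (Bc * w - 1)/(Bc * w)" using assms by (simp add: field_simps)
  have p: "(B - w) * (Bc * w - 1) \<noteq> 0" using assms by simp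
  have br: "B/(B-w) + (Bc*w)/(Bc*w-1) - 1 = (B*Bc - 1)*w/((B-w)*(Bc*w-1))"
    using assms p by (simp add: field_simps)
  have M: "1/(1 - (1/B)*w) + 1/(1 - (1/Bc)*(1/w)) - 1 = (B*Bc - 1)*w/((B-w)*(Bc*w-1))"
    unfolding e2 e3 br[symmetric] by simp
  have L: "1 / ((B - w)/r * (((Bc*w - 1)/w)/r)) = r^2 * w / ((B-w)*(Bc*w-1))"
    using assms p by (simp add: field_simps power2_eq_square)
  have "1 / ((B - w)/r * ((Bc - 1/w)/r)) = r^2 * w / ((B-w)*(Bc*w-1))"
    unfolding e1 by (rule L)
  also have "\<dots> = r^2/(B*Bc - 1) * ((B*Bc - 1)*w/((B-w)*(Bc*w-1)))"
    by (rule canc[symmetric]) (use assms in simp)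
  also have "\<dots> = r^2/(B*Bc - 1) * (1/(1 - (1/B)*w) + 1/(1 - (1/Bc)*(1/w)) - 1)"
    by (simp only: M)
  finally show ?thesis .
qed

lemma gen_div:
  fixes X r a z :: complex
  shows "X \<noteq> 0 \<Longrightarrow> a \<noteq> 0 \<Longrightarrow> z \<noteq> 0 \<Longrightarrow> r \<noteq> 0 \<Longrightarrow> r^2 / (r * (X / (a*z))) = r * a * z / X"
  by (simp add: field_simps power2_eq_square)

lemma KK_alg:
  fixes a z r :: complex
  assumes "a \<noteq> 0" "z \<noteq> 0" "z - a \<noteq> 0" "1 - a*z \<noteq> 0" "r \<noteq> 0" and ra: "r * a = a^2 + 1"
  shows "r^2 / ((r - z) * (r - 1/z) - 1) = r * a * z / ((z - a) * (1 - a*z))"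
proof -
  have e0: "a * z * (r - z - 1/z) = (z - a) * (1 - a*z)"
  proof -
    have "a * z * (r - z - 1/z) = (r*a) * z - a*z^2 - a" using assms(2) by (simp add: field_simps power2_eq_square)
    also have "\<dots> = (a^2+1)*z - a*z^2 - a" by (simp add: ra)
    also have "\<dots> = (z - a) * (1 - a*z)" by (simp add: algebra_simps power2_eq_square)
    finally show ?thesis .
  qed
  have e1: "(r - z) * (r - 1/z) - 1 = r * (r - z - 1/z)" using assms by (simp add: field_simps)
  have e2: "r - z - 1/z = (z - a) * (1 - a*z) / (a*z)"
    using e0 assms by (simp add: eq_divide_eq mult.commute)
  have X: "(z - a) * (1 - a*z) \<noteq> 0" using assms by simp
  show ?thesis unfolding e1 e2 using X assms(1,2,5) by (rule gen_div)
qed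

definition KK :: "real \<Rightarrow> complex \<Rightarrow> complex" where
  "KK r z = complex_of_real (r^2 / ((cmod (complex_of_real r - z))^2 - 1))"

lemma pden_nz:
  assumes r: "r > 2" and z: "cmod z = 1" and w: "cmod w = 1"
  shows "pden r (z, w) \<noteq> 0"
proof
  assume "pden r (z, w) = 0"
  then have "1 - (z + w) / complex_of_real r = 0" by (simp add: pden_def)
  then have e: "z + w = complex_of_real r" using r by (simp add: field_simps)
  have "r = cmod (z + w)" using e r by simp
  also have "\<dots> \<le> cmod z + cmod w" by (rule norm_triangle_ineq)
  finally show False using r z w by simp
qed

lemma cmodB:
  assumes r: "r > 2" and z: "cmod z = 1"
  shows "cmod (complex_of_real r - z) > 1"
proof -
  have "cmod (complex_of_real r) - cmod z \<le> cmod (complex_of_real r - z)"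
    by (rule norm_triangle_ineq2)
  then show ?thesis using z r by simp
qed

lemma cnj_unit: "cmod w = 1 \<Longrightarrow> cnj w = 1 / w"
proof -
  assume a: "cmod w = 1"
  then have e: "w * cnj w = 1" using complex_norm_square[of w] by simp
  then have "w \<noteq> 0" by auto
  then show ?thesis using e by (simp add: eq_divide_eq mult.commute)
qed

lemma W_identity:
  assumes r: "r > 2" and z: "cmod z = 1" and w: "cmod w = 1"
  shows "1 / complex_of_real ((cmod (pden r (z, w)))^2) =
     KK r z * (1 / (1 - (1/(complex_of_real r - z)) * w) + cnj (1 / (1 - (1/(complex_of_real r - z)) * w)) - 1)"
proof -
  define B where "B = complex_of_real r - z"
  have Bm: "cmod B > 1" unfolding B_def using cmodB[OF r z] .
  have B0: "B \<noteq> 0" using Bm by auto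
  have Bc0: "cnj B \<noteq> 0" using B0 by simp
  have w0: "w \<noteq> 0" using w by auto
  have BB: "complex_of_real ((cmod B)^2) = B * cnj B" by (rule complex_norm_square)
  have BB1: "B * cnj B - 1 \<noteq> 0"
  proof
    assume "B * cnj B - 1 = 0"
    then have "complex_of_real ((cmod B)^2) = 1" using BB by simp
    then have "(cmod B)^2 = 1" using of_real_eq_1_iff by blast
    moreover have "1 < (cmod B)^2" using Bm by (simp add: one_less_power)
    ultimately show False by simp
  qed
  have Bw: "B - w \<noteq> 0"
  proof
    assume "B - w = 0" then have "cmod B = cmod w" by simp
    then show False using Bm w by simp
  qed
  have Bcw: "cnj B * w - 1 \<noteq> 0"
  proof
    assume "cnj B * w - 1 = 0"
    then have "cnj B * w = 1" by simp
    then have "cmod (cnj B * w) = 1" by simp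
    then show False using Bm w by (simp add: norm_mult)
  qed
  have r0: "complex_of_real r \<noteq> 0" using r by simp
  have pd: "pden r (z, w) = (B - w) / complex_of_real r"
    unfolding pden_def B_def using r0 by (simp add: field_simps)
  have LHS: "complex_of_real ((cmod (pden r (z, w)))^2) = (B - w)/complex_of_real r * ((cnj B - 1/w)/complex_of_real r)"
    unfolding complex_norm_square pd by (simp add: cnj_unit[OF w])
  have KKe: "KK r z = (complex_of_real r)^2 / (B * cnj B - 1)"
    unfolding KK_def B_def[symmetric] of_real_divide of_real_diff BB by simp
  have cg: "cnj (1 / (1 - (1/B) * w)) = 1 / (1 - (1/cnj B) * (1/w))" by (simp add: cnj_unit[OF w])
  show ?thesis unfolding LHS KKe B_def[symmetric] cg
    by (rule W_alg[OF B0 Bc0 w0 Bw Bcw BB1 r0])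
qed

lemma W_mean:
  assumes r: "r > 2" and z: "cmod z = 1"
  shows "((\<lambda>t. cnj (cis t) ^ n / complex_of_real ((cmod (pden r (z, cis t)))^2)) has_integral
          (2*pi * KK r z * (1/(complex_of_real r - z))^n)) {0..2*pi}"
proof -
  define c where "c = 1/(complex_of_real r - z)"
  have cm: "cmod c < 1" unfolding c_def using cmodB[OF r z] by (simp add: norm_divide divide_less_eq_1)
  obtain R where R: "1 < R" "\<And>w. w \<in> ball 0 R \<Longrightarrow> 1 - c * w \<noteq> 0"
    using geo_radius[OF cm] by blast
  have hol: "(\<lambda>w. w ^ n / (1 - c * w)) holomorphic_on ball 0 R"
    using R(2) by (intro holomorphic_intros) auto
  have A: "((\<lambda>t. cnj (cis t) ^ n / (1 - c * cis t)) has_integral (2*pi*c^n)) {0..2*pi}"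
    by (rule mean_geo[OF cm])
  have Bi: "((\<lambda>t. cnj (cis t ^ n / (1 - c * cis t))) has_integral (2*pi*cnj (0^n / (1 - c*0)))) {0..2*pi}"
    using mean_cnj_holo[OF hol R(1)] by simp
  have C: "((\<lambda>t. cis t ^ 0 * cnj (cis t) ^ n) has_integral (if 0 = n then 2*pi else 0)) {0..2*pi}"
    by (rule mean_mono)
  have S: "((\<lambda>t. KK r z * (cnj (cis t) ^ n / (1 - c * cis t) + cnj (cis t ^ n / (1 - c * cis t))
              - cis t ^ 0 * cnj (cis t) ^ n)) has_integral
      (KK r z * (2*pi*c^n + 2*pi*cnj (0^n / (1 - c*0)) - (if 0 = n then 2*pi else 0)))) {0..2*pi}"
    by (intro has_integral_mult_right has_integral_diff has_integral_add A Bi C)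
  show ?thesis
  proof (rule hi_eq[OF S])
    show "KK r z * (2*pi*c^n + 2*pi*cnj (0^n / (1 - c*0)) - (if 0 = n then 2*pi else 0))
          = 2*pi * KK r z * (1/(complex_of_real r - z))^n"
      unfolding c_def[symmetric] by (cases n) auto
    fix t :: real
    have id: "1 / complex_of_real ((cmod (pden r (z, cis t)))^2)
              = KK r z * (1 / (1 - c * cis t) + cnj (1 / (1 - c * cis t)) - 1)"
      unfolding c_def by (rule W_identity[OF r z]) simp
    have "cnj (cis t) ^ n / complex_of_real ((cmod (pden r (z, cis t)))^2)
          = cnj (cis t) ^ n * (1 / complex_of_real ((cmod (pden r (z, cis t)))^2))" by simp
    also have "\<dots> = cnj (cis t) ^ n * (KK r z * (1 / (1 - c * cis t) + cnj (1 / (1 - c * cis t)) - 1))"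
      by (simp only: id)
    also have "\<dots> = KK r z * (cnj (cis t) ^ n / (1 - c * cis t) + cnj (cis t ^ n / (1 - c * cis t))
              - cis t ^ 0 * cnj (cis t) ^ n)"
      by (simp add: algebra_simps)
    finally show "KK r z * (cnj (cis t) ^ n / (1 - c * cis t) + cnj (cis t ^ n / (1 - c * cis t))
              - cis t ^ 0 * cnj (cis t) ^ n) = cnj (cis t) ^ n / complex_of_real ((cmod (pden r (z, cis t)))^2)"
      by simp
  qed
qed

lemma aval_facts:
  assumes r: "r > 2"
  shows "0 < aval r" "aval r < 1" "(aval r)^2 + 1 = r * aval r"
proof -
  define s where "s = sqrt (r^2/4 - 1)"
  have r4: "1 \<le> r^2/4"
  proof -
    have "2^2 \<le> r^2" using r by (intro power_mono) auto
    then show ?thesis by simp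
  qed
  have s0: "0 \<le> s" unfolding s_def using r4 by simp
  have s2: "s^2 = r^2/4 - 1" unfolding s_def using r4 by simp
  have a: "aval r = r/2 - s" unfolding aval_def s_def ..
  have "s^2 < (r/2)^2" using s2 by (simp add: power_divide)
  then have "s < r/2" by (rule power_less_imp_less_base) (use r in simp)
  then show "0 < aval r" unfolding a by simp
  have e1: "(r/2 - 1)^2 = r^2/4 - r + 1" by (simp add: power2_diff power_divide)
  have "(r/2 - 1)^2 < s^2" using s2 r e1 by linarith
  then have "r/2 - 1 < s" by (rule power_less_imp_less_base) (use s0 in simp)
  then show "aval r < 1" unfolding a by simp
  have e2: "(r/2 - s)^2 = r^2/4 + s^2 - r * s" by (simp add: power2_diff power_divide)
  have e3: "r * (r/2 - s) = r^2/2 - r * s" by (simp add: power2_eq_square algebra_simps)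
  show "(aval r)^2 + 1 = r * aval r" unfolding a using s2 e2 e3 by linarith
qed

lemma KK_circle:
  assumes r: "r > 2" and z: "cmod z = 1"
  shows "KK r z = complex_of_real (r * aval r) * z /
      ((z - complex_of_real (aval r)) * (1 - complex_of_real (aval r) * z))"
proof -
  define a where "a = complex_of_real (aval r)"
  define rr where "rr = complex_of_real r"
  note af = aval_facts[OF r]
  have KKe: "KK r z = rr^2 / ((rr - z) * (rr - 1/z) - 1)"
    unfolding KK_def of_real_divide of_real_diff complex_norm_square rr_def
    by (simp add: cnj_unit[OF z])
  have a0: "a \<noteq> 0" unfolding a_def using af by simp
  have z0: "z \<noteq> 0" using z by auto
  have za: "z - a \<noteq> 0"
  proof
    assume "z - a = 0" then have "cmod z = cmod a" by simp
    then show False using z af unfolding a_def by simp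
  qed
  have az: "1 - a * z \<noteq> 0"
  proof
    assume "1 - a * z = 0" then have "cmod (a * z) = 1" by (metis eq_iff_diff_eq_0 norm_one)
    then show False using z af unfolding a_def by (simp add: norm_mult)
  qed
  have r0: "rr \<noteq> 0" unfolding rr_def using r by simp
  have "complex_of_real (r * aval r) = complex_of_real ((aval r)^2 + 1)" using af(3) by simp
  then have ra: "rr * a = a^2 + 1" unfolding rr_def a_def by simp
  show ?thesis unfolding KKe KK_alg[OF a0 z0 za az r0 ra]
    by (simp add: a_def rr_def)
qed


definition integ :: "real \<Rightarrow> (complex \<times> complex \<Rightarrow> complex) \<Rightarrow> (complex \<times> complex \<Rightarrow> complex) \<Rightarrow> real \<Rightarrow> real \<Rightarrow> complex" where
  "integ r g h x y = g (cis x, cis y) * cnj (h (cis x, cis y)) / complex_of_real ((cmod (pden r (cis x, cis y)))^2)"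

lemma integ_cont:
  assumes r: "r > 2" and g: "continuous_on UNIV g" and h: "continuous_on UNIV h"
  shows "continuous_on UNIV (\<lambda>x::real\<times>real. integ r g h (fst x) (snd x))"
proof -
  have c1: "continuous_on UNIV (\<lambda>x::real\<times>real. (cis (fst x), cis (snd x)))"
    by (intro continuous_intros)
  have cg: "continuous_on UNIV (\<lambda>x::real\<times>real. g (cis (fst x), cis (snd x)))"
    using continuous_on_compose2[OF g c1] by simp
  have ch: "continuous_on UNIV (\<lambda>x::real\<times>real. h (cis (fst x), cis (snd x)))"
    using continuous_on_compose2[OF h c1] by simp
  have cd: "continuous_on UNIV (\<lambda>x::real\<times>real. complex_of_real ((cmod (pden r (cis (fst x), cis (snd x))))^2))"
    unfolding pden_def by (intro continuous_intros) (use r in auto)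
  have nz: "complex_of_real ((cmod (pden r (cis (fst x), cis (snd x))))^2) \<noteq> 0" for x :: "real \<times> real"
    using pden_nz[OF r, of "cis (fst x)" "cis (snd x)"] by simp
  show ?thesis unfolding integ_def
    by (intro continuous_on_divide continuous_on_mult cg continuous_on_cnj ch cd) (use nz in auto)
qed

lemma herm_iter:
  assumes r: "r > 2" and g: "continuous_on UNIV g" and h: "continuous_on UNIV h"
  shows "herm r g h = complex_of_real (1/(4*pi^2)) *
           integral {0..2*pi} (\<lambda>x. integral {0..2*pi} (\<lambda>y. integ r g h x y))"
proof -
  have fe: "(\<lambda>(\<theta>::real, \<phi>::real). g (cis \<theta>, cis \<phi>) * cnj (h (cis \<theta>, cis \<phi>))
          / complex_of_real ((cmod (pden r (cis \<theta>, cis \<phi>)))^2)) = (\<lambda>x. integ r g h (fst x) (snd x))"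
    by (auto simp: integ_def)
  have cont: "continuous_on (cbox (0,0) (2*pi, 2*pi)) (\<lambda>x::real\<times>real. integ r g h (fst x) (snd x))"
    using integ_cont[OF r g h] by (rule continuous_on_subset) simp
  show ?thesis unfolding herm_def fe integral_prod_continuous[OF cont]
    by (simp add: cbox_interval)
qed

lemma herm_cnj: "herm r g h = cnj (herm r h g)"
  unfolding herm_def by (simp add: integral_cnj case_prod_unfold mult.commute)

lemma herm_swap:
  assumes r: "r > 2" and g: "continuous_on UNIV g" and h: "continuous_on UNIV h"
  shows "herm r (\<lambda>z. g (snd z, fst z)) (\<lambda>z. h (snd z, fst z)) = herm r g h"
proof -
  have sw: "continuous_on UNIV (\<lambda>z::complex\<times>complex. (snd z, fst z))" by (intro continuous_intros)
  have g': "continuous_on UNIV (\<lambda>z. g (snd z, fst z))" using continuous_on_compose2[OF g sw] by simp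
  have h': "continuous_on UNIV (\<lambda>z. h (snd z, fst z))" using continuous_on_compose2[OF h sw] by simp
  have ie: "integ r (\<lambda>z. g (snd z, fst z)) (\<lambda>z. h (snd z, fst z)) x y = integ r g h y x" for x y
    by (simp add: integ_def pden_def add.commute)
  have cont: "continuous_on (cbox (0,0) (2*pi, 2*pi)) (\<lambda>(x,y). integ r g h y x)"
  proof -
    have "continuous_on UNIV (\<lambda>x::real\<times>real. integ r (\<lambda>z. g (snd z, fst z)) (\<lambda>z. h (snd z, fst z)) (fst x) (snd x))"
      by (rule integ_cont[OF r g' h'])
    then have "continuous_on UNIV (\<lambda>(x::real,y::real). integ r g h y x)"
      by (simp add: ie case_prod_unfold)
    then show ?thesis by (rule continuous_on_subset) simp
  qed
  have "integral (cbox 0 (2*pi)) (\<lambda>x. integral (cbox 0 (2*pi)) (\<lambda>y. integ r g h y x)) =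
        integral (cbox 0 (2*pi)) (\<lambda>y. integral (cbox 0 (2*pi)) (\<lambda>x. integ r g h y x))"
    by (rule integral_swap_continuous[OF cont])
  then have "integral {0..2*pi} (\<lambda>x. integral {0..2*pi} (\<lambda>y. integ r g h y x)) =
        integral {0..2*pi} (\<lambda>y. integral {0..2*pi} (\<lambda>x. integ r g h y x))"
    by (simp add: cbox_interval)
  then show ?thesis
    unfolding herm_iter[OF r g' h'] herm_iter[OF r g h] ie by simp
qed


definition c0 :: "real \<Rightarrow> real" where "c0 r = root 4 (1 - 4 / r^2)"
definition dd :: "real \<Rightarrow> real" where "dd r = c0 r / sqrt (1 - (aval r)^2)"

lemma ofam_Cst: "ofam r Cst = (\<lambda>z. complex_of_real (c0 r))"
  by (simp add: ofam_def c0_def)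
lemma ofam_Ione: "ofam r (Ione k) = (\<lambda>z. fst z ^ k * complex_of_real (dd r) * (fst z - complex_of_real (aval r)))"
  by (simp add: ofam_def c0_def dd_def)
lemma ofam_Itwo: "ofam r (Itwo k) = (\<lambda>z. snd z ^ k * complex_of_real (dd r) * (snd z - complex_of_real (aval r)))"
  by (simp add: ofam_def c0_def dd_def)
lemma ofam_Iboth: "ofam r (Iboth k1 k2) = (\<lambda>z. fst z ^ k1 * snd z ^ k2 *
          (fst z * snd z - fst z / complex_of_real r - snd z / complex_of_real r))"
  by (simp add: ofam_def)

lemma ofam_cont: "r > 2 \<Longrightarrow> continuous_on UNIV (ofam r i)"
  by (cases i) (auto simp: ofam_Cst ofam_Ione ofam_Itwo ofam_Iboth intro!: continuous_intros)

lemma aval_key: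
  assumes r: "r > 2"
  shows "sqrt (1 - 4/r^2) * (r * aval r) = 1 - (aval r)^2"
proof -
  define s where "s = sqrt (r^2/4 - 1)"
  have r4: "1 \<le> r^2/4"
  proof -
    have "2^2 \<le> r^2" using r by (intro power_mono) auto
    then show ?thesis by simp
  qed
  have s0: "0 \<le> s" unfolding s_def using r4 by simp
  have s2: "s^2 = r^2/4 - 1" unfolding s_def using r4 by simp
  have a: "aval r = r/2 - s" unfolding aval_def s_def ..
  have q1: "(2 * s / r)^2 = 4 * s^2 / r^2" by (simp add: power_divide power_mult_distrib)
  also have "\<dots> = 1 - 4/r^2" using s2 r by (simp add: field_simps)
  finally have q: "(2 * s / r)^2 = 1 - 4/r^2" .
  have u: "sqrt (1 - 4/r^2) = 2 * s / r"
    by (rule real_sqrt_unique[OF q]) (use s0 r in simp)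
  have e2: "(r/2 - s)^2 = r^2/4 + s^2 - r * s" by (simp add: power2_diff power_divide)
  have e3: "2 * s / r * (r * (r/2 - s)) = r * s - 2 * s^2" using r by (simp add: power2_eq_square field_simps)
  show ?thesis unfolding u a using e2 e3 s2 by linarith
qed

lemma cfacts:
  assumes r: "r > 2"
  shows "0 < c0 r" "(c0 r)^2 * (r * aval r) = 1 - (aval r)^2" "(dd r)^2 * (r * aval r) = 1"
    "0 < 1 - (aval r)^2"
proof -
  note af = aval_facts[OF r]
  have r2: "4 < r^2"
  proof -
    have "2^2 < r^2" using r by (intro power_strict_mono) auto
    then show ?thesis by simp
  qed
  have "0 < r^2" using r by simp
  then have "4 / r^2 < 1" using r2 by (subst divide_less_eq_1_pos) auto
  then have x: "0 < 1 - 4 / r^2" by simp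
  show "0 < c0 r" unfolding c0_def using x by simp
  have "(c0 r ^ 2)^2 = 1 - 4/r^2" unfolding c0_def
    using x by (simp flip: power_mult)
  then have cs: "c0 r ^ 2 = sqrt (1 - 4/r^2)"
    by (intro real_sqrt_unique[symmetric]) auto
  show c2: "(c0 r)^2 * (r * aval r) = 1 - (aval r)^2" unfolding cs by (rule aval_key[OF r])
  have a1: "(aval r)^2 < 1" using af by (simp add: power_less_one_iff)
  show pos: "0 < 1 - (aval r)^2" using a1 by simp
  have "(dd r)^2 = (c0 r)^2 / (1 - (aval r)^2)" unfolding dd_def
    using pos by (simp add: power_divide)
  then have "(dd r)^2 * (r * aval r) = ((c0 r)^2 * (r * aval r)) / (1 - (aval r)^2)" by simp
  also have "\<dots> = 1" unfolding c2 using pos by simp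
  finally show "(dd r)^2 * (r * aval r) = 1" .
qed


lemma herm_eval:
  assumes r: "r > 2" and g: "continuous_on UNIV g" and h: "continuous_on UNIV h"
    and inner: "\<And>x. ((\<lambda>y. integ r g h x y) has_integral F x) {0..2*pi}"
    and outer: "(F has_integral V) {0..2*pi}"
  shows "herm r g h = complex_of_real (1/(4*pi^2)) * V"
proof -
  have "integral {0..2*pi} (\<lambda>x. integral {0..2*pi} (\<lambda>y. integ r g h x y)) = integral {0..2*pi} F"
    by (rule integral_cong) (rule integral_unique[OF inner])
  also have "\<dots> = V" by (rule integral_unique[OF outer])
  finally show ?thesis unfolding herm_iter[OF r g h] by simp
qed

lemma circ_facts:
  assumes r: "r > 2" and z: "cmod z = 1"
  shows "z \<noteq> 0" "z - complex_of_real (aval r) \<noteq> 0" "1 - complex_of_real (aval r) * z \<noteq> 0"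
    "cnj z = 1 / z"
proof -
  note af = aval_facts[OF r]
  show "z \<noteq> 0" using z by auto
  show "z - complex_of_real (aval r) \<noteq> 0"
  proof
    assume "z - complex_of_real (aval r) = 0" then have "cmod z = cmod (complex_of_real (aval r))" by simp
    then show False using z af by simp
  qed
  show "1 - complex_of_real (aval r) * z \<noteq> 0"
  proof
    assume "1 - complex_of_real (aval r) * z = 0"
    then have "complex_of_real (aval r) * z = 1" by simp
    then have "cmod (complex_of_real (aval r) * z) = 1" by simp
    then show False using z af by (simp add: norm_mult)
  qed
  show "cnj z = 1 / z" by (rule cnj_unit[OF z])
qed

lemma aval_radius:
  assumes r: "r > 2"
  obtains R where "1 < R" "R \<le> 2" "\<And>w. w \<in> ball 0 R \<Longrightarrow> 1 - complex_of_real (aval r) * w \<noteq> 0"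
proof -
  have "cmod (complex_of_real (aval r)) < 1" using aval_facts[OF r] by simp
  then obtain R where R: "1 < R" "\<And>w. w \<in> ball 0 R \<Longrightarrow> 1 - complex_of_real (aval r) * w \<noteq> 0"
    using geo_radius by blast
  show ?thesis
  proof (rule that[of "min R 2"])
    show "1 < min R 2" using R(1) by simp
    show "min R 2 \<le> 2" by simp
    fix w :: complex assume "w \<in> ball 0 (min R 2)"
    then show "1 - complex_of_real (aval r) * w \<noteq> 0" using R(2) by auto
  qed
qed

lemma KK_alg2:
  fixes a z :: complex
  assumes "z \<noteq> 0" "z - a \<noteq> 0" "1 - a * z \<noteq> 0" "1 - a^2 \<noteq> 0"
  shows "K * z / ((z - a) * (1 - a * z)) = K / (1 - a^2) * (1 / (1 - a * z) + a * (1/z) / (1 - a * (1/z)))"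
proof -
  have e: "a * (1/z) / (1 - a * (1/z)) = a / (z - a)" using assms by (simp add: field_simps)
  have br: "1 / (1 - a * z) + a / (z - a) = (1 - a^2) * z / ((z - a) * (1 - a * z))"
    using assms by (simp add: field_simps power2_eq_square)
  show ?thesis unfolding e br by (rule canc[symmetric]) (use assms in simp)
qed

lemma KK_mean:
  assumes r: "r > 2"
  shows "((\<lambda>x. KK r (cis x)) has_integral (2*pi * complex_of_real (r * aval r / (1 - (aval r)^2)))) {0..2*pi}"
proof -
  define a where "a = complex_of_real (aval r)"
  obtain R where R: "1 < R" "R \<le> 2" "\<And>w. w \<in> ball 0 R \<Longrightarrow> 1 - a * w \<noteq> 0"
    using aval_radius[OF r] unfolding a_def by blast
  have h1: "(\<lambda>w. 1 / (1 - a * w)) holomorphic_on ball 0 R" using R(3) by (intro holomorphic_intros) auto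
  have h2: "(\<lambda>w. a * w / (1 - a * w)) holomorphic_on ball 0 R" using R(3) by (intro holomorphic_intros) auto
  have I: "((\<lambda>x. complex_of_real (r * aval r / (1 - (aval r)^2)) *
        (1 / (1 - a * cis x) + cnj (a * cis x / (1 - a * cis x)))) has_integral
        complex_of_real (r * aval r / (1 - (aval r)^2)) * (2*pi * (1 / (1 - a * 0)) + 2*pi * cnj (a * 0 / (1 - a * 0)))) {0..2*pi}"
    by (intro has_integral_mult_right has_integral_add mean_holo[OF h1 R(1)] mean_cnj_holo[OF h2 R(1)])
  show ?thesis
  proof (rule hi_eq[OF I])
    show "complex_of_real (r * aval r / (1 - (aval r)^2)) * (2*pi * (1 / (1 - a * 0)) + 2*pi * cnj (a * 0 / (1 - a * 0)))
      = 2*pi * complex_of_real (r * aval r / (1 - (aval r)^2))" by simp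
    fix x :: real
    note cf = circ_facts[OF r, of "cis x", simplified]
    have a2: "1 - a^2 \<noteq> 0"
    proof -
      have "0 < 1 - (aval r)^2" using cfacts(4)[OF r] .
      then have "(aval r)^2 \<noteq> 1" by simp
      then have "complex_of_real ((aval r)^2) \<noteq> complex_of_real 1" by (metis of_real_eq_iff)
      then show ?thesis unfolding a_def by simp
    qed
    have "KK r (cis x) = complex_of_real (r * aval r) * cis x / ((cis x - a) * (1 - a * cis x))"
      unfolding a_def by (rule KK_circle[OF r]) simp
    also have "\<dots> = complex_of_real (r * aval r) / (1 - a^2) * (1 / (1 - a * cis x) + a * (1 / cis x) / (1 - a * (1 / cis x)))"
      by (rule KK_alg2) (use cf a2 in \<open>simp_all add: a_def\<close>)
    also have "\<dots> = complex_of_real (r * aval r / (1 - (aval r)^2)) *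
        (1 / (1 - a * cis x) + cnj (a * cis x / (1 - a * cis x)))"
      by (simp add: a_def cf(4))
    finally show "complex_of_real (r * aval r / (1 - (aval r)^2)) *
        (1 / (1 - a * cis x) + cnj (a * cis x / (1 - a * cis x))) = KK r (cis x)" by simp
  qed
qed


lemma fourpi: "complex_of_real (1/(4*pi^2)) * (complex_of_real (2*pi)*(complex_of_real (2*pi)*Z)) = Z"
  by (simp add: field_simps power2_eq_square)

lemma herm_CC:
  assumes r: "r > 2"
  shows "herm r (ofam r Cst) (ofam r Cst) = 1"
proof -
  define Z where "Z = complex_of_real ((c0 r)^2) * complex_of_real (r * aval r / (1 - (aval r)^2))"
  have inner: "((\<lambda>y. integ r (ofam r Cst) (ofam r Cst) x y) has_integral
      (complex_of_real ((c0 r)^2) * (2*pi * KK r (cis x) * (1/(complex_of_real r - cis x))^0))) {0..2*pi}" for x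
  proof (rule hi_eq[OF has_integral_mult_right[OF W_mean[OF r, of "cis x" 0]]])
    fix y
    show "complex_of_real ((c0 r)\<^sup>2) * (cnj (cis y) ^ 0 / complex_of_real ((cmod (pden r (cis x, cis y)))\<^sup>2))
      = integ r (ofam r Cst) (ofam r Cst) x y"
      by (simp add: integ_def ofam_Cst power2_eq_square)
  qed simp_all
  have outer: "((\<lambda>x. complex_of_real ((c0 r)^2) * (2*pi * KK r (cis x) * (1/(complex_of_real r - cis x))^0))
      has_integral (2*pi*(2*pi*Z))) {0..2*pi}"
  proof (rule hi_eq[OF has_integral_mult_right[OF has_integral_mult_right[OF KK_mean[OF r]]]])
    show "complex_of_real ((c0 r)\<^sup>2) * (complex_of_real (2 * pi) *
      (complex_of_real (2 * pi) * complex_of_real (r * aval r / (1 - (aval r)\<^sup>2)))) = 2*pi*(2*pi*Z)"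
      unfolding Z_def by (simp add: mult_ac)
  qed (simp add: mult_ac)
  have Z1: "Z = 1"
  proof -
    have "(c0 r)^2 * (r * aval r / (1 - (aval r)^2)) = ((c0 r)^2 * (r * aval r)) / (1 - (aval r)^2)"
      by simp
    also have "\<dots> = 1" unfolding cfacts(2)[OF r] using cfacts(4)[OF r] by simp
    finally have "(c0 r)^2 * (r * aval r / (1 - (aval r)^2)) = 1" .
    then have "complex_of_real ((c0 r)^2 * (r * aval r / (1 - (aval r)^2))) = complex_of_real 1"
      by (rule arg_cong)
    then show ?thesis unfolding Z_def of_real_mult of_real_1 .
  qed
  show ?thesis
    unfolding herm_eval[OF r ofam_cont[OF r] ofam_cont[OF r] inner outer] Z1
    by (simp add: field_simps power2_eq_square)
qed

lemma I1_alg: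
  fixes a z w K :: complex
  assumes "z \<noteq> 0" "z - a \<noteq> 0" "1 - a * z \<noteq> 0"
  shows "K * z / ((z - a) * (1 - a * z)) * (w * (1/z - a)) = K * (w * (1/z) / (1 - a * (1/z)))"
proof -
  have e1: "z * (1/z - a) = 1 - a * z" using assms by (simp add: field_simps)
  have e2: "1 - a * (1/z) = (z - a) / z" using assms by (simp add: field_simps)
  have "K * z / ((z - a) * (1 - a * z)) * (w * (1/z - a)) = K * w * (z * (1/z - a)) / ((z - a) * (1 - a * z))"
    by (simp add: mult_ac)
  also have "\<dots> = K * w / (z - a)" unfolding e1 by (rule nonzero_mult_divide_mult_cancel_right[OF assms(3)])
  also have "\<dots> = K * (w * (1/z) / (1 - a * (1/z)))" unfolding e2 using assms by (simp add: field_simps)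
  finally show ?thesis .
qed

lemma I2_alg:
  fixes a z K :: complex
  assumes "z \<noteq> 0" "z - a \<noteq> 0" "1 - a * z \<noteq> 0"
  shows "K * z / ((z - a) * (1 - a * z)) * ((z - a) * (1/z - a)) = K"
proof -
  have e1: "z * (1/z - a) = 1 - a * z" using assms by (simp add: field_simps)
  have "K * z / ((z - a) * (1 - a * z)) * ((z - a) * (1/z - a)) = K * (z - a) * (z * (1/z - a)) / ((z - a) * (1 - a * z))"
    by (simp add: mult_ac)
  also have "\<dots> = K" unfolding e1 using assms by simp
  finally show ?thesis .
qed

lemma I1:
  assumes r: "r > 2" and z: "cmod z = 1"
  shows "KK r z * cnj (z ^ j * (z - complex_of_real (aval r))) =
    complex_of_real (r * aval r) * cnj (z ^ Suc j / (1 - complex_of_real (aval r) * z))"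
proof -
  note cf = circ_facts[OF r z]
  have "KK r z * cnj (z ^ j * (z - complex_of_real (aval r))) =
     complex_of_real (r * aval r) * z / ((z - complex_of_real (aval r)) * (1 - complex_of_real (aval r) * z))
     * ((1/z)^j * (1/z - complex_of_real (aval r)))"
    unfolding KK_circle[OF r z] by (simp add: cf(4))
  also have "\<dots> = complex_of_real (r * aval r) * ((1/z)^j * (1/z) / (1 - complex_of_real (aval r) * (1/z)))"
    by (rule I1_alg[OF cf(1-3)])
  also have "\<dots> = complex_of_real (r * aval r) * cnj (z ^ Suc j / (1 - complex_of_real (aval r) * z))"
    by (simp add: cf(4) power_Suc2)
  finally show ?thesis .
qed

lemma I2:
  assumes r: "r > 2" and z: "cmod z = 1"
  shows "KK r z * ((z - complex_of_real (aval r)) * cnj (z - complex_of_real (aval r))) =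
    complex_of_real (r * aval r)"
proof -
  note cf = circ_facts[OF r z]
  have "KK r z * ((z - complex_of_real (aval r)) * cnj (z - complex_of_real (aval r))) =
     complex_of_real (r * aval r) * z / ((z - complex_of_real (aval r)) * (1 - complex_of_real (aval r) * z))
     * ((z - complex_of_real (aval r)) * (1/z - complex_of_real (aval r)))"
    unfolding KK_circle[OF r z] by (simp add: cf(4))
  also have "\<dots> = complex_of_real (r * aval r)" by (rule I2_alg[OF cf(1-3)])
  finally show ?thesis .
qed


lemma herm_C1:
  assumes r: "r > 2"
  shows "herm r (ofam r Cst) (ofam r (Ione j)) = 0"
proof -
  define a where "a = complex_of_real (aval r)"
  define A where "A = (\<lambda>x. complex_of_real (c0 r) * cnj (cis x ^ j * complex_of_real (dd r) * (cis x - a)))"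
  have inner: "((\<lambda>y. integ r (ofam r Cst) (ofam r (Ione j)) x y) has_integral
      (A x * (2*pi * KK r (cis x) * (1/(complex_of_real r - cis x))^0))) {0..2*pi}" for x
  proof (rule hi_eq[OF has_integral_mult_right[OF W_mean[OF r, of "cis x" 0]]])
    fix y
    show "A x * (cnj (cis y) ^ 0 / complex_of_real ((cmod (pden r (cis x, cis y)))\<^sup>2))
      = integ r (ofam r Cst) (ofam r (Ione j)) x y"
      by (simp add: integ_def ofam_Cst ofam_Ione A_def a_def)
  qed simp_all
  obtain R where R: "1 < R" "R \<le> 2" "\<And>w. w \<in> ball 0 R \<Longrightarrow> 1 - a * w \<noteq> 0"
    using aval_radius[OF r] unfolding a_def by blast
  have hol: "(\<lambda>w. w ^ Suc j / (1 - a * w)) holomorphic_on ball 0 R"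
    using R(3) by (intro holomorphic_intros) auto
  define C where "C = complex_of_real (c0 r) * complex_of_real (dd r) * (2*pi) * complex_of_real (r * aval r)"
  have outer: "((\<lambda>x. A x * (2*pi * KK r (cis x) * (1/(complex_of_real r - cis x))^0)) has_integral 0) {0..2*pi}"
  proof (rule hi_eq[OF has_integral_mult_right[OF mean_cnj_holo[OF hol R(1)], of C]])
    show "C * (complex_of_real (2 * pi) * cnj (0 ^ Suc j / (1 - a * 0))) = 0" by simp
    fix x
    have "A x * (2*pi * KK r (cis x) * (1/(complex_of_real r - cis x))^0) =
      complex_of_real (c0 r) * complex_of_real (dd r) * (2*pi) * (KK r (cis x) * cnj (cis x ^ j * (cis x - a)))"
      by (simp add: A_def mult_ac)
    also have "\<dots> = C * cnj (cis x ^ Suc j / (1 - a * cis x))"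
      unfolding a_def I1[OF r norm_cis] C_def by (simp add: mult_ac)
    finally show "C * cnj (cis x ^ Suc j / (1 - a * cis x)) =
      A x * (2*pi * KK r (cis x) * (1/(complex_of_real r - cis x))^0)" by simp
  qed
  show ?thesis
    unfolding herm_eval[OF r ofam_cont[OF r] ofam_cont[OF r] inner outer] by simp
qed

lemma herm_11:
  assumes r: "r > 2"
  shows "herm r (ofam r (Ione k)) (ofam r (Ione j)) = (if k = j then 1 else 0)"
proof -
  define a where "a = complex_of_real (aval r)"
  define A where "A = (\<lambda>x. complex_of_real ((dd r)^2) * (cis x ^ k * cnj (cis x) ^ j) * ((cis x - a) * cnj (cis x - a)))"
  have inner: "((\<lambda>y. integ r (ofam r (Ione k)) (ofam r (Ione j)) x y) has_integral
      (A x * (2*pi * KK r (cis x) * (1/(complex_of_real r - cis x))^0))) {0..2*pi}" for x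
  proof (rule hi_eq[OF has_integral_mult_right[OF W_mean[OF r, of "cis x" 0]]])
    fix y
    show "A x * (cnj (cis y) ^ 0 / complex_of_real ((cmod (pden r (cis x, cis y)))\<^sup>2))
      = integ r (ofam r (Ione k)) (ofam r (Ione j)) x y"
      by (simp add: integ_def ofam_Ione A_def a_def power2_eq_square mult_ac)
  qed simp_all
  define C where "C = complex_of_real ((dd r)^2 * (r * aval r)) * (2*pi)"
  have outer: "((\<lambda>x. A x * (2*pi * KK r (cis x) * (1/(complex_of_real r - cis x))^0)) has_integral
     (C * (if k = j then 2*pi else 0))) {0..2*pi}"
  proof (rule hi_eq[OF has_integral_mult_right[OF mean_mono[of k j]], of C])
    fix x
    have "A x * (2*pi * KK r (cis x) * (1/(complex_of_real r - cis x))^0) =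
      complex_of_real ((dd r)^2) * (2*pi) * (cis x ^ k * cnj (cis x) ^ j) * (KK r (cis x) * ((cis x - a) * cnj (cis x - a)))"
      by (simp add: A_def mult_ac)
    also have "\<dots> = C * (cis x ^ k * cnj (cis x) ^ j)"
      unfolding a_def I2[OF r norm_cis] C_def by (simp add: mult_ac)
    finally show "C * (cis x ^ k * cnj (cis x) ^ j) =
      A x * (2*pi * KK r (cis x) * (1/(complex_of_real r - cis x))^0)" by simp
  qed simp
  show ?thesis
    unfolding herm_eval[OF r ofam_cont[OF r] ofam_cont[OF r] inner outer] C_def cfacts(3)[OF r]
    by (simp add: field_simps power2_eq_square)
qed


lemma D_nz:
  assumes r: "r > 2"
  shows "complex_of_real ((cmod (pden r (cis x, cis y)))^2) \<noteq> 0"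
  using pden_nz[OF r norm_cis norm_cis] by simp

lemma I3:
  assumes r: "r > 2" and z: "cmod z = 1"
  shows "KK r z * (z - complex_of_real (aval r)) = complex_of_real (r * aval r) * (z / (1 - complex_of_real (aval r) * z))"
proof -
  note cf = circ_facts[OF r z]
  have "\<And>K. K * z / ((z - complex_of_real (aval r)) * (1 - complex_of_real (aval r) * z)) * (z - complex_of_real (aval r))
     = K * z * (z - complex_of_real (aval r)) / ((1 - complex_of_real (aval r) * z) * (z - complex_of_real (aval r)))"
    by (simp add: mult_ac)
  also have "\<And>K. K * z * (z - complex_of_real (aval r)) / ((1 - complex_of_real (aval r) * z) * (z - complex_of_real (aval r)))
     = K * (z / (1 - complex_of_real (aval r) * z))"
    using nonzero_mult_divide_mult_cancel_right[OF cf(2)] by simp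
  finally show ?thesis unfolding KK_circle[OF r z] .
qed

lemma herm_12:
  assumes r: "r > 2"
  shows "herm r (ofam r (Ione k)) (ofam r (Itwo j)) = 0"
proof -
  define a where "a = complex_of_real (aval r)"
  define P where "P = (\<lambda>x. complex_of_real ((dd r)^2) * cis x ^ k * (cis x - a))"
  define c where "c = (\<lambda>x. 1/(complex_of_real r - cis x))"
  have inner: "((\<lambda>y. integ r (ofam r (Ione k)) (ofam r (Itwo j)) x y) has_integral
      (P x * (2*pi * KK r (cis x) * c x ^ Suc j) - P x * a * (2*pi * KK r (cis x) * c x ^ j))) {0..2*pi}" for x
  proof (rule hi_eq[OF has_integral_diff[OF has_integral_mult_right[OF W_mean[OF r, of "cis x" "Suc j"]]
         has_integral_mult_right[OF W_mean[OF r, of "cis x" j]]]])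
    fix y
    show "P x * (cnj (cis y) ^ Suc j / complex_of_real ((cmod (pden r (cis x, cis y)))\<^sup>2)) -
          P x * a * (cnj (cis y) ^ j / complex_of_real ((cmod (pden r (cis x, cis y)))\<^sup>2))
      = integ r (ofam r (Ione k)) (ofam r (Itwo j)) x y"
      using D_nz[OF r, of x y]
      by (simp add: integ_def ofam_Ione ofam_Itwo P_def a_def power2_eq_square field_simps)
  qed (simp_all add: c_def)
  obtain R where R: "1 < R" "R \<le> 2" "\<And>w. w \<in> ball 0 R \<Longrightarrow> 1 - a * w \<noteq> 0"
    using aval_radius[OF r] unfolding a_def by blast
  have rw: "complex_of_real r - w \<noteq> 0" if "w \<in> ball 0 R" for w
  proof
    assume "complex_of_real r - w = 0"
    then have "cmod w = r" by (metis eq_iff_diff_eq_0 norm_of_real abs_of_pos r less_trans zero_less_numeral)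
    then show False using that R(2) r by simp
  qed
  have hol: "(\<lambda>w. w ^ Suc k / (1 - a * w) * ((1/(complex_of_real r - w)) ^ Suc j - a * (1/(complex_of_real r - w)) ^ j))
      holomorphic_on ball 0 R"
    using R(3) rw by (intro holomorphic_intros) auto
  define C where "C = complex_of_real ((dd r)^2) * (2*pi) * complex_of_real (r * aval r)"
  have outer: "((\<lambda>x. P x * (2*pi * KK r (cis x) * c x ^ Suc j) - P x * a * (2*pi * KK r (cis x) * c x ^ j))
      has_integral 0) {0..2*pi}"
  proof (rule hi_eq[OF has_integral_mult_right[OF mean_holo[OF hol R(1)], of C]])
    show "C * (complex_of_real (2 * pi) * (0 ^ Suc k / (1 - a * 0) *
        ((1 / (complex_of_real r - 0)) ^ Suc j - a * (1 / (complex_of_real r - 0)) ^ j))) = 0" by simp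
    fix x
    have "P x * (2*pi * KK r (cis x) * c x ^ Suc j) - P x * a * (2*pi * KK r (cis x) * c x ^ j) =
       complex_of_real ((dd r)^2) * (2*pi) * cis x ^ k * (KK r (cis x) * (cis x - a)) * (c x ^ Suc j - a * c x ^ j)"
      by (simp add: P_def algebra_simps)
    also have "\<dots> = complex_of_real ((dd r)^2) * (2*pi) * cis x ^ k * (complex_of_real (r * aval r) * (cis x / (1 - a * cis x))) * (c x ^ Suc j - a * c x ^ j)"
      unfolding a_def I3[OF r norm_cis] ..
    also have "\<dots> = C * (cis x ^ Suc k / (1 - a * cis x) * ((1 / (complex_of_real r - cis x)) ^ Suc j - a * (1 / (complex_of_real r - cis x)) ^ j))"
      by (simp add: C_def c_def mult_ac)
    finally show "C * (cis x ^ Suc k / (1 - a * cis x) * ((1 / (complex_of_real r - cis x)) ^ Suc j - a * (1 / (complex_of_real r - cis x)) ^ j)) =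
       P x * (2*pi * KK r (cis x) * c x ^ Suc j) - P x * a * (2*pi * KK r (cis x) * c x ^ j)" by simp
  qed
  show ?thesis
    unfolding herm_eval[OF r ofam_cont[OF r] ofam_cont[OF r] inner outer] by simp
qed

lemma qid:
  assumes r: "r > 2" and z: "cmod z = 1" and w: "cmod w = 1"
  shows "z * w - z / complex_of_real r - w / complex_of_real r = z * w * cnj (pden r (z, w))"
proof -
  have z0: "z \<noteq> 0" "w \<noteq> 0" using z w by auto
  have r0: "complex_of_real r \<noteq> 0" using r by simp
  show ?thesis unfolding pden_def using z0 r0 by (simp add: cnj_unit[OF z] cnj_unit[OF w] field_simps)
qed

lemma herm_BH:
  assumes r: "r > 2" and H: "continuous_on UNIV H"
  shows "herm r (ofam r (Iboth k1 k2)) (\<lambda>z. H (fst z)) = 0"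
proof -
  have fc: "continuous_on UNIV (\<lambda>z::complex\<times>complex. fst z)" by (intro continuous_intros)
  have Hc: "continuous_on UNIV (\<lambda>z::complex\<times>complex. H (fst z))"
    using continuous_on_compose2[OF H fc] by simp
  have inner: "((\<lambda>y. integ r (ofam r (Iboth k1 k2)) (\<lambda>z. H (fst z)) x y) has_integral 0) {0..2*pi}" for x
  proof -
    define z where "z = cis x"
    have z1: "cmod z = 1" unfolding z_def by simp
    have pnz: "pden r (z, w) \<noteq> 0" if "w \<in> ball 0 (r - 1)" for w
    proof
      assume "pden r (z, w) = 0"
      then have "1 - (z + w) / complex_of_real r = 0" by (simp add: pden_def)
      then have e: "z + w = complex_of_real r" using r by (simp add: field_simps)
      have "r = cmod (z + w)" using e r by simp
      also have "\<dots> \<le> cmod z + cmod w" by (rule norm_triangle_ineq)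
      finally show False using that z1 by simp
    qed
    have hol: "(\<lambda>w. w ^ Suc k2 / pden r (z, w)) holomorphic_on ball 0 (r - 1)"
      using pnz unfolding pden_def by (intro holomorphic_intros) auto
    have R1: "1 < r - 1" using r by simp
    show ?thesis
    proof (rule hi_eq[OF has_integral_mult_right[OF mean_holo[OF hol R1], of "z ^ Suc k1 * cnj (H z)"]])
      show "z ^ Suc k1 * cnj (H z) * (complex_of_real (2 * pi) * (0 ^ Suc k2 / pden r (z, 0))) = 0" by simp
      fix y
      define w where "w = cis y"
      have w1: "cmod w = 1" unfolding w_def by simp
      have p0: "pden r (z, w) \<noteq> 0" by (rule pden_nz[OF r z1 w1])
      have "integ r (ofam r (Iboth k1 k2)) (\<lambda>z. H (fst z)) x y =
         z ^ k1 * w ^ k2 * cnj (H z) * ((z * w * cnj (pden r (z, w))) / (pden r (z, w) * cnj (pden r (z, w))))"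
        unfolding integ_def ofam_Iboth z_def[symmetric] w_def[symmetric] complex_norm_square fst_conv snd_conv qid[OF r z1 w1]
        by (simp add: mult_ac)
      also have "\<dots> = z ^ k1 * w ^ k2 * cnj (H z) * (z * w / pden r (z, w))"
        using p0 by simp
      also have "\<dots> = z ^ Suc k1 * cnj (H z) * (w ^ Suc k2 / pden r (z, w))"
        by (simp add: mult_ac)
      finally show "z ^ Suc k1 * cnj (H z) * (cis y ^ Suc k2 / pden r (z, cis y)) =
         integ r (ofam r (Iboth k1 k2)) (\<lambda>z. H (fst z)) x y" unfolding w_def by simp
    qed
  qed
  have outer: "((\<lambda>x. 0) has_integral (0::complex)) {0..2*pi}" by (rule has_integral_0)
  show ?thesis
    unfolding herm_eval[OF r ofam_cont[OF r] Hc inner outer] by simp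
qed

lemma herm_BB:
  assumes r: "r > 2"
  shows "herm r (ofam r (Iboth k1 k2)) (ofam r (Iboth l1 l2)) = (if k1 = l1 \<and> k2 = l2 then 1 else 0)"
proof -
  have inner: "((\<lambda>y. integ r (ofam r (Iboth k1 k2)) (ofam r (Iboth l1 l2)) x y) has_integral
     (cis x ^ k1 * cnj (cis x) ^ l1 * (if k2 = l2 then 2*pi else 0))) {0..2*pi}" for x
  proof (rule hi_eq[OF has_integral_mult_right[OF mean_mono[of k2 l2], of "cis x ^ k1 * cnj (cis x) ^ l1"]])
    fix y
    define z where "z = cis x"
    define w where "w = cis y"
    have z1: "cmod z = 1" unfolding z_def by simp
    have w1: "cmod w = 1" unfolding w_def by simp
    have p0: "pden r (z, w) \<noteq> 0" by (rule pden_nz[OF r z1 w1])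
    have zz: "z * cnj z = 1" "w * cnj w = 1" using z1 w1 complex_norm_square[of z] complex_norm_square[of w] by simp_all
    have qq: "(z * w * cnj (pden r (z, w))) * cnj (z * w * cnj (pden r (z, w))) = pden r (z, w) * cnj (pden r (z, w))"
    proof -
      have "(z * w * cnj (pden r (z, w))) * cnj (z * w * cnj (pden r (z, w))) =
         (z * cnj z) * (w * cnj w) * (pden r (z, w) * cnj (pden r (z, w)))" by (simp add: mult_ac)
      then show ?thesis using zz by simp
    qed
    have "integ r (ofam r (Iboth k1 k2)) (ofam r (Iboth l1 l2)) x y =
       z ^ k1 * w ^ k2 * cnj (z ^ l1 * w ^ l2) * ((z * w * cnj (pden r (z, w))) * cnj (z * w * cnj (pden r (z, w)))
         / (pden r (z, w) * cnj (pden r (z, w))))"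
      unfolding integ_def ofam_Iboth z_def[symmetric] w_def[symmetric] complex_norm_square fst_conv snd_conv qid[OF r z1 w1]
      by (simp add: mult_ac)
    also have "\<dots> = z ^ k1 * w ^ k2 * cnj (z ^ l1 * w ^ l2)" unfolding qq using p0 by simp
    finally show "cis x ^ k1 * cnj (cis x) ^ l1 * (cis y ^ k2 * cnj (cis y) ^ l2) =
        integ r (ofam r (Iboth k1 k2)) (ofam r (Iboth l1 l2)) x y"
      unfolding z_def w_def by (simp add: mult_ac)
  qed simp_all
  have outer: "((\<lambda>x. cis x ^ k1 * cnj (cis x) ^ l1 * complex_of_real (if k2 = l2 then 2*pi else 0)) has_integral
      (complex_of_real (if k1 = l1 then 2*pi else 0) * complex_of_real (if k2 = l2 then 2*pi else 0))) {0..2*pi}"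
    by (rule has_integral_mult_left[OF mean_mono])
  show ?thesis
    unfolding herm_eval[OF r ofam_cont[OF r] ofam_cont[OF r] inner outer]
    by (simp add: field_simps power2_eq_square)
qed


lemma swC: "(\<lambda>z. ofam r Cst (snd z, fst z)) = ofam r Cst" by (simp add: ofam_Cst)
lemma swI: "(\<lambda>z. ofam r (Ione k) (snd z, fst z)) = ofam r (Itwo k)" by (simp add: ofam_Ione ofam_Itwo)
lemma swI2: "(\<lambda>z. ofam r (Itwo k) (snd z, fst z)) = ofam r (Ione k)" by (simp add: ofam_Ione ofam_Itwo)
lemma swB: "(\<lambda>z. ofam r (Iboth k2 k1) (snd z, fst z)) = ofam r (Iboth k1 k2)"
  by (rule ext) (simp add: ofam_Iboth algebra_simps)

lemma Cst_fst: "ofam r Cst = (\<lambda>z. (\<lambda>u. complex_of_real (c0 r)) (fst z))" by (simp add: ofam_Cst)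
lemma Ione_fst: "ofam r (Ione k) = (\<lambda>z. (\<lambda>u. u ^ k * complex_of_real (dd r) * (u - complex_of_real (aval r))) (fst z))"
  by (simp add: ofam_Ione)

lemma herm_BC: "r > 2 \<Longrightarrow> herm r (ofam r (Iboth k1 k2)) (ofam r Cst) = 0"
  by (subst Cst_fst, rule herm_BH) (auto intro: continuous_intros)

lemma herm_B1: "r > 2 \<Longrightarrow> herm r (ofam r (Iboth k1 k2)) (ofam r (Ione j)) = 0"
  by (subst Ione_fst, rule herm_BH) (auto intro!: continuous_intros)

lemma herm_sw:
  assumes r: "r > 2"
  shows "herm r (\<lambda>z. ofam r i (snd z, fst z)) (\<lambda>z. ofam r j (snd z, fst z)) = herm r (ofam r i) (ofam r j)"
  by (rule herm_swap[OF r ofam_cont[OF r] ofam_cont[OF r]])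

lemma herm_B2: assumes r: "r > 2" shows "herm r (ofam r (Iboth k1 k2)) (ofam r (Itwo j)) = 0"
  using herm_sw[OF r, of "Iboth k2 k1" "Ione j"] herm_B1[OF r, of k2 k1 j] by (simp only: swB swI)

lemma herm_C2: assumes r: "r > 2" shows "herm r (ofam r Cst) (ofam r (Itwo j)) = 0"
  using herm_sw[OF r, of Cst "Ione j"] herm_C1[OF r, of j] by (simp only: swC swI)

lemma herm_22: assumes r: "r > 2" shows "herm r (ofam r (Itwo k)) (ofam r (Itwo j)) = (if k = j then 1 else 0)"
  using herm_sw[OF r, of "Ione k" "Ione j"] herm_11[OF r, of k j] by (simp only: swI)

lemma herm_rev0: "herm r h g = 0 \<Longrightarrow> herm r g h = 0"
  using herm_cnj[of r g h] by simp

lemma herm_CB: "r > 2 \<Longrightarrow> herm r (ofam r Cst) (ofam r (Iboth k1 k2)) = 0"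
  by (rule herm_rev0, rule herm_BC)

lemma herm_1C: "r > 2 \<Longrightarrow> herm r (ofam r (Ione k)) (ofam r Cst) = 0"
  by (rule herm_rev0, rule herm_C1)
lemma herm_2C: "r > 2 \<Longrightarrow> herm r (ofam r (Itwo k)) (ofam r Cst) = 0"
  by (rule herm_rev0, rule herm_C2)
lemma herm_21: "r > 2 \<Longrightarrow> herm r (ofam r (Itwo k)) (ofam r (Ione j)) = 0"
  by (rule herm_rev0, rule herm_12)
lemma herm_1B: "r > 2 \<Longrightarrow> herm r (ofam r (Ione k)) (ofam r (Iboth k1 k2)) = 0"
  by (rule herm_rev0, rule herm_B1)
lemma herm_2B: "r > 2 \<Longrightarrow> herm r (ofam r (Itwo k)) (ofam r (Iboth k1 k2)) = 0"
  by (rule herm_rev0, rule herm_B2)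

lemma orth:
  assumes r: "r > 2"
  shows "herm r (ofam r i) (ofam r j) = (if i = j then 1 else 0)"
proof -
  have cn: "herm r (ofam r i) (ofam r j) = 0" if "herm r (ofam r j) (ofam r i) = 0"
    using herm_cnj[of r "ofam r i" "ofam r j"] that by simp
  show ?thesis
    by (cases i; cases j) (simp_all add: herm_CC[OF r] herm_C1[OF r] herm_C2[OF r] herm_CB[OF r]
       herm_1C[OF r] herm_11[OF r] herm_12[OF r] herm_1B[OF r] herm_2C[OF r] herm_21[OF r] herm_22[OF r]
       herm_2B[OF r] herm_BC[OF r] herm_B1[OF r] herm_B2[OF r] herm_BB[OF r])
qed


lemma fspan_base: "F i \<in> fspan F"
  unfolding fspan_def by (rule CollectI, rule exI[of _ "{i}"], rule exI[of _ "\<lambda>_. 1"]) simp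

lemma fspan_add:
  assumes "f \<in> fspan F" "g \<in> fspan F"
  shows "(\<lambda>z. f z + g z) \<in> fspan F"
proof -
  obtain I c where I: "finite I" "f = (\<lambda>z. \<Sum>i\<in>I. c i * F i z)" using assms(1) unfolding fspan_def by blast
  obtain J d where J: "finite J" "g = (\<lambda>z. \<Sum>i\<in>J. d i * F i z)" using assms(2) unfolding fspan_def by blast
  define e where "e = (\<lambda>i. (if i \<in> I then c i else 0) + (if i \<in> J then d i else 0))"
  have eq: "(\<lambda>z. f z + g z) = (\<lambda>z. \<Sum>i\<in>I \<union> J. e i * F i z)"
  proof
    fix z
    have "(\<Sum>i\<in>I \<union> J. e i * F i z) = (\<Sum>i\<in>I \<union> J. (if i \<in> I then c i * F i z else 0) + (if i \<in> J then d i * F i z else 0))"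
      by (rule sum.cong) (auto simp: e_def distrib_right)
    also have "\<dots> = (\<Sum>i\<in>I \<union> J. (if i \<in> I then c i * F i z else 0)) + (\<Sum>i\<in>I \<union> J. (if i \<in> J then d i * F i z else 0))"
      by (rule sum.distrib)
    also have "\<dots> = (\<Sum>i\<in>(I \<union> J) \<inter> I. c i * F i z) + (\<Sum>i\<in>(I \<union> J) \<inter> J. d i * F i z)"
      using I(1) J(1) by (simp only: sum.inter_restrict finite_Un)
    also have "\<dots> = f z + g z"
    proof -
      have ints: "(I \<union> J) \<inter> I = I" "(I \<union> J) \<inter> J = J" by auto
      show ?thesis unfolding ints using I J by simp
    qed
    finally show "f z + g z = (\<Sum>i\<in>I \<union> J. e i * F i z)" by simp
  qed
  show ?thesis unfolding fspan_def
    by (rule CollectI, rule exI[of _ "I \<union> J"], rule exI[of _ e]) (use I(1) J(1) eq in simp)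
qed

lemma fspan_smult:
  assumes "f \<in> fspan F"
  shows "(\<lambda>z. k * f z) \<in> fspan F"
proof -
  obtain I c where I: "finite I" "f = (\<lambda>z. \<Sum>i\<in>I. c i * F i z)" using assms unfolding fspan_def by blast
  have eq: "(\<lambda>z. k * f z) = (\<lambda>z. \<Sum>i\<in>I. (k * c i) * F i z)"
    unfolding I(2) by (simp add: sum_distrib_left mult.assoc)
  show ?thesis unfolding fspan_def
    by (rule CollectI, rule exI[of _ I], rule exI[of _ "\<lambda>i. k * c i"]) (use I(1) eq in simp)
qed

lemma fspan_zero: "(\<lambda>z. 0) \<in> fspan F"
  unfolding fspan_def by (rule CollectI, rule exI[of _ "{}"]) simp

lemma fspan_sum:
  assumes "finite S" "\<And>s. s \<in> S \<Longrightarrow> f s \<in> fspan F"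
  shows "(\<lambda>z. \<Sum>s\<in>S. f s z) \<in> fspan F"
  using assms
proof (induction S rule: finite_induct)
  case empty then show ?case using fspan_zero by simp
next
  case (insert x S)
  then have "(\<lambda>z. f x z + (\<Sum>s\<in>S. f s z)) \<in> fspan F" by (intro fspan_add) auto
  then show ?case using insert by simp
qed

lemma fspan_sub:
  assumes "\<And>i. F i \<in> fspan G"
  shows "fspan F \<subseteq> fspan G"
proof
  fix f assume "f \<in> fspan F"
  then obtain I c where I: "finite I" "f = (\<lambda>z. \<Sum>i\<in>I. c i * F i z)" unfolding fspan_def by blast
  have "(\<lambda>z. \<Sum>i\<in>I. (\<lambda>i z. c i * F i z) i z) \<in> fspan G"
    by (rule fspan_sum[OF I(1)]) (simp add: fspan_smult assms)
  then show "f \<in> fspan G" unfolding I(2) by simp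
qed

definition mon :: "nat \<times> nat \<Rightarrow> complex \<times> complex \<Rightarrow> complex" where
  "mon p z = fst z ^ fst p * snd z ^ snd p"

lemma poly2_fspan: "poly2_space = fspan mon"
  unfolding poly2_space_def fspan_def mon_def by (simp add: case_prod_unfold mult.assoc)

lemma fspan_eq: "f \<in> fspan F \<Longrightarrow> f = g \<Longrightarrow> g \<in> fspan F" by simp

lemma ofam_in_mon:
  assumes r: "r > 2"
  shows "ofam r i \<in> fspan mon"
proof (cases i)
  case Cst
  show ?thesis unfolding Cst
    by (rule fspan_eq[OF fspan_smult[OF fspan_base[of mon "(0,0)"], of "complex_of_real (c0 r)"]])
       (simp add: ofam_Cst mon_def)
next
  case (Ione k)
  show ?thesis unfolding Ione
    by (rule fspan_eq[OF fspan_add[OF fspan_smult[OF fspan_base[of mon "(Suc k,0)"], of "complex_of_real (dd r)"]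
          fspan_smult[OF fspan_base[of mon "(k,0)"], of "- complex_of_real (dd r) * complex_of_real (aval r)"]]])
       (auto simp: ofam_Ione mon_def algebra_simps)
next
  case (Itwo k)
  show ?thesis unfolding Itwo
    by (rule fspan_eq[OF fspan_add[OF fspan_smult[OF fspan_base[of mon "(0,Suc k)"], of "complex_of_real (dd r)"]
          fspan_smult[OF fspan_base[of mon "(0,k)"], of "- complex_of_real (dd r) * complex_of_real (aval r)"]]])
       (auto simp: ofam_Itwo mon_def algebra_simps)
next
  case (Iboth k1 k2)
  show ?thesis unfolding Iboth
    by (rule fspan_eq[OF fspan_add[OF fspan_base[of mon "(Suc k1,Suc k2)"]
          fspan_add[OF fspan_smult[OF fspan_base[of mon "(Suc k1,k2)"], of "- 1 / complex_of_real r"]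
             fspan_smult[OF fspan_base[of mon "(k1,Suc k2)"], of "- 1 / complex_of_real r"]]]])
       (auto simp: ofam_Iboth mon_def algebra_simps)
qed

lemma mon_fst:
  assumes r: "r > 2"
  shows "mon (k, 0) \<in> fspan (ofam r)"
proof (induction k)
  case 0
  have "c0 r \<noteq> 0" using cfacts(1)[OF r] by simp
  then show ?case
    by (intro fspan_eq[OF fspan_smult[OF fspan_base[of "ofam r" Cst], of "1 / complex_of_real (c0 r)"]])
       (auto simp: ofam_Cst mon_def)
next
  case (Suc k)
  have d0: "dd r \<noteq> 0" using cfacts(3)[OF r] by auto
  show ?case
    by (rule fspan_eq[OF fspan_add[OF fspan_smult[OF fspan_base[of "ofam r" "Ione k"], of "1 / complex_of_real (dd r)"]
          fspan_smult[OF Suc.IH, of "complex_of_real (aval r)"]]])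
       (use d0 in \<open>auto simp: ofam_Ione mon_def field_simps\<close>)
qed

lemma mon_snd:
  assumes r: "r > 2"
  shows "mon (0, k) \<in> fspan (ofam r)"
proof (induction k)
  case 0
  have "c0 r \<noteq> 0" using cfacts(1)[OF r] by simp
  then show ?case
    by (intro fspan_eq[OF fspan_smult[OF fspan_base[of "ofam r" Cst], of "1 / complex_of_real (c0 r)"]])
       (auto simp: ofam_Cst mon_def)
next
  case (Suc k)
  have d0: "dd r \<noteq> 0" using cfacts(3)[OF r] by auto
  show ?case
    by (rule fspan_eq[OF fspan_add[OF fspan_smult[OF fspan_base[of "ofam r" "Itwo k"], of "1 / complex_of_real (dd r)"]
          fspan_smult[OF Suc.IH, of "complex_of_real (aval r)"]]])
       (use d0 in \<open>auto simp: ofam_Itwo mon_def field_simps\<close>)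
qed

lemma mon_in:
  assumes r: "r > 2"
  shows "mon p \<in> fspan (ofam r)"
proof -
  have "\<forall>k1 k2. k1 + k2 = n \<longrightarrow> mon (k1, k2) \<in> fspan (ofam r)" for n
  proof (induction n rule: less_induct)
    case (less n)
    show ?case
    proof (intro allI impI)
      fix k1 k2 assume n: "k1 + k2 = n"
      show "mon (k1, k2) \<in> fspan (ofam r)"
      proof (cases "k1 = 0 \<or> k2 = 0")
        case True then show ?thesis using mon_fst[OF r] mon_snd[OF r] by auto
      next
        case False
        then have "k1 \<noteq> 0" "k2 \<noteq> 0" by auto
        then obtain m1 m2 where k: "k1 = Suc m1" "k2 = Suc m2" using not0_implies_Suc by blast
        have h1: "mon (Suc m1, m2) \<in> fspan (ofam r)" using less[of "Suc m1 + m2"] n k by simp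
        have h2: "mon (m1, Suc m2) \<in> fspan (ofam r)" using less[of "m1 + Suc m2"] n k by simp
        have r0: "complex_of_real r \<noteq> 0" using r by simp
        show ?thesis unfolding k
          by (rule fspan_eq[OF fspan_add[OF fspan_base[of "ofam r" "Iboth m1 m2"]
               fspan_add[OF fspan_smult[OF h1, of "1 / complex_of_real r"] fspan_smult[OF h2, of "1 / complex_of_real r"]]]])
             (use r0 in \<open>auto simp: ofam_Iboth mon_def field_simps\<close>)
      qed
    qed
  qed
  then show ?thesis by (cases p) auto
qed

lemma span_eq:
  assumes r: "r > 2"
  shows "fspan (ofam r) = poly2_space"
  unfolding poly2_fspan
proof
  show "fspan (ofam r) \<subseteq> fspan mon" by (rule fspan_sub) (rule ofam_in_mon[OF r])
  show "fspan mon \<subseteq> fspan (ofam r)" by (rule fspan_sub) (rule mon_in[OF r])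
qed

theorem theorem6:
  fixes r :: real
  assumes "r > 2"
  shows "(\<forall>i j. herm r (ofam r i) (ofam r j) = (if i = j then 1 else 0))
         \<and> fspan (ofam r) = poly2_space"
  using orth[OF assms] span_eq[OF assms] by blast


end
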